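(* Let $M$ be a finite-horizon MDP with exogenous/endogenous structure as in the context, and suppose $M$ is $\varepsilon_{air}$-AIR, the reward $r:\mathcal{S}\times\mathcal{A}\to[0,r_{max}]$ is known, and $\hat P^{\mathrm{end}}:\mathcal{S}\times\mathcal{A}\to\Delta(\mathcal{S}^{\mathrm{end}})$ satisfies $D_{TV}(P^{\mathrm{end}}(s,a,\cdot),\hat P^{\mathrm{end}}(s,a,\cdot))\le\varepsilon_p$ for all $(s,a)$. Let $\pi$ be a deterministic policy (fixed independently of the data), and let $\hat J(\pi,M)=\frac1N\sum_{i=1}^N\sum_{t=0}^{H-1}r(\tilde S_t^{(i)},\tilde A_t^{(i)})$ be the synthetic-rollout estimator defined in the context. Then for any $\zeta\in(0,1)$, with probability at least $1-\zeta$, $$\big|\hat J(\pi,M)-J(\pi,M)\big|\le v_{max}\left(H\varepsilon_{air}+H\varepsilon_p+\sqrt{\frac{\ln(2/\zeta)}{2N}}\right).$$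
   Context: MDP: $M=(\mathcal{S},\mathcal{A},P,r,H,\nu)$ with finite $\mathcal{S},\mathcal{A}$, reward in $[0,r_{max}]$, horizon $H$, initial distribution $\nu$; states are layered ($\mathcal{S}=\bigsqcup_{h=0}^{H-1}\mathcal{S}_h$, $\mathcal{S}_h$ the states reachable at step $h$), policies are stationary maps $\mathcal{S}\to\Delta(\mathcal{A})$. $\mathbb{P}^\pi_M$ is the trajectory law ($S_0\sim\nu$, $A_t\sim\pi(\cdot|S_t)$, $S_{t+1}\sim P(S_t,A_t,\cdot)$), $J(\pi,M)=\mathbb{E}^\pi_M[\sum_{h=0}^{H-1}r(S_h,A_h)]$, $v_{max}=Hr_{max}$. Exogenous structure: $\mathcal{S}=\mathcal{S}^{\mathrm{exo}}\times\mathcal{S}^{\mathrm{end}}$, $P(s,a,s')=P^{\mathrm{exo}}(s^{\mathrm{exo}},a,s'^{\mathrm{exo}})P^{\mathrm{end}}(s,a,s'^{\mathrm{end}})$. $M$ is $\varepsilon$-AIR if $D_{TV}(P^{\mathrm{exo}}(s^{\mathrm{exo}},a,\cdot),P^{\mathrm{exo}}(s^{\mathrm{exo}},a',\cdot))\le\varepsilon$ for all $s^{\mathrm{exo}},a,a'$; $D_{TV}(p,p')=\frac12\|p-p'\|_1$. Data: $N$ i.i.d. trajectories $(S_0^{(i)},A_0^{(i)},\dots,S_{H-1}^{(i)},A_{H-1}^{(i)})$ from $\mathbb{P}^{\pi_b}_M$ for some data collection policy $\pi_b$. Estimator: for each $i$, build a synthetic trajectory with $\tilde S_0^{(i)}=S_0^{(i)}$,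 $\tilde A_t^{(i)}\sim\pi(\tilde S_t^{(i)})$, $\tilde S_{t+1}^{(i),\mathrm{end}}\sim\hat P^{\mathrm{end}}(\tilde S_t^{(i)},\tilde A_t^{(i)},\cdot)$ and $\tilde S_{t+1}^{(i)}=(S_{t+1}^{(i),\mathrm{exo}},\tilde S_{t+1}^{(i),\mathrm{end}})$, where $S_{t+1}^{(i),\mathrm{exo}}$ is the exogenous component of the observed data state. *)

theory Defs
  imports "HOL-Probability.Probability"
begin

definition tv_dist :: "'b::finite pmf \<Rightarrow> 'b pmf \<Rightarrow> real" where
  "tv_dist p q = (1/2) * (\<Sum>x\<in>UNIV. \<bar>pmf p x - pmf q x\<bar>)"

definition trans :: "('x \<Rightarrow> 'a \<Rightarrow> 'x pmf) \<Rightarrow> ('x \<times> 'e \<Rightarrow> 'a \<Rightarrow> 'e pmf)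
    \<Rightarrow> 'x \<times> 'e \<Rightarrow> 'a \<Rightarrow> ('x \<times> 'e) pmf" where
  "trans Pexo Pend s a = pair_pmf (Pexo (fst s) a) (Pend s a)"

definition AIR :: "real \<Rightarrow> ('x \<Rightarrow> 'a \<Rightarrow> 'x::finite pmf) \<Rightarrow> bool" where
  "AIR eps Pexo \<longleftrightarrow> (\<forall>x a a'. tv_dist (Pexo x a) (Pexo x a') \<le> eps)"

definition layered :: "nat \<Rightarrow> 's pmf \<Rightarrow> ('s \<Rightarrow> 'a \<Rightarrow> 's pmf) \<Rightarrow> bool" where
  "layered H \<nu> P \<longleftrightarrow> (\<exists>layer :: 's \<Rightarrow> nat.
      (\<forall>s. pmf \<nu> s \<noteq> 0 \<longrightarrow> layer s = 0) \<and>
      (\<forall>s a s'. layer s + 1 < H \<longrightarrow> pmf (P s a) s' \<noteq> 0 \<longrightarrow> layer s' = layer s + 1))"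

text \<open>Law of the (state, action) sequence of n steps started in state s under a stationary
  stochastic policy pol. (The state after the last action is sampled but discarded.)\<close>
fun traj :: "('s \<Rightarrow> 'a \<Rightarrow> 's pmf) \<Rightarrow> ('s \<Rightarrow> 'a pmf) \<Rightarrow> nat \<Rightarrow> 's \<Rightarrow> ('s \<times> 'a) list pmf" where
  "traj P pol 0 s = return_pmf []"
| "traj P pol (Suc n) s =
     bind_pmf (pol s) (\<lambda>a. bind_pmf (P s a) (\<lambda>s'. bind_pmf (traj P pol n s')
       (\<lambda>rest. return_pmf ((s, a) # rest))))"

definition traj_law :: "'s pmf \<Rightarrow> ('s \<Rightarrow> 'a \<Rightarrow> 's pmf) \<Rightarrow> ('s \<Rightarrow> 'a pmf) \<Rightarrow> nat
    \<Rightarrow> ('s \<times> 'a) list pmf" where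
  "traj_law \<nu> P pol H = bind_pmf \<nu> (traj P pol H)"

definition ret :: "('s \<Rightarrow> 'a \<Rightarrow> real) \<Rightarrow> ('s \<times> 'a) list \<Rightarrow> real" where
  "ret r \<tau> = (\<Sum>(s, a) \<leftarrow> \<tau>. r s a)"

definition value_fn :: "'s pmf \<Rightarrow> ('s \<Rightarrow> 'a \<Rightarrow> 's pmf) \<Rightarrow> ('s \<Rightarrow> 'a \<Rightarrow> real) \<Rightarrow> nat
    \<Rightarrow> ('s \<Rightarrow> 'a) \<Rightarrow> real" where
  "value_fn \<nu> P r H \<pi> =
     measure_pmf.expectation (traj_law \<nu> P (\<lambda>s. return_pmf (\<pi> s)) H) (ret r)"

text \<open>Synthetic rollout from state s, given the observed future exogenous states xs:
  actions from pi, endogenous parts from Phat, exogenous parts copied from the data.\<close>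
fun synth :: "('x \<times> 'e \<Rightarrow> 'a) \<Rightarrow> ('x \<times> 'e \<Rightarrow> 'a \<Rightarrow> 'e pmf) \<Rightarrow> 'x \<times> 'e \<Rightarrow> 'x list
    \<Rightarrow> (('x \<times> 'e) \<times> 'a) list pmf" where
  "synth \<pi> Phat s [] = return_pmf [(s, \<pi> s)]"
| "synth \<pi> Phat s (x # xs) =
     bind_pmf (Phat s (\<pi> s)) (\<lambda>e. bind_pmf (synth \<pi> Phat (x, e) xs)
       (\<lambda>rest. return_pmf ((s, \<pi> s) # rest)))"

definition synth_traj :: "('x \<times> 'e \<Rightarrow> 'a) \<Rightarrow> ('x \<times> 'e \<Rightarrow> 'a \<Rightarrow> 'e pmf)
    \<Rightarrow> (('x \<times> 'e) \<times> 'a) list \<Rightarrow> (('x \<times> 'e) \<times> 'a) list pmf" where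
  "synth_traj \<pi> Phat \<tau> = (case \<tau> of [] \<Rightarrow> return_pmf []
      | (s, a) # rest \<Rightarrow> synth \<pi> Phat s (map (\<lambda>(s', a'). fst s') rest))"

fun iid :: "nat \<Rightarrow> 'b pmf \<Rightarrow> 'b list pmf" where
  "iid 0 p = return_pmf []"
| "iid (Suc n) p = bind_pmf p (\<lambda>x. bind_pmf (iid n p) (\<lambda>xs. return_pmf (x # xs)))"

definition data_and_synth :: "nat \<Rightarrow> ('x \<times> 'e) pmf \<Rightarrow> ('x \<Rightarrow> 'a \<Rightarrow> 'x pmf)
    \<Rightarrow> ('x \<times> 'e \<Rightarrow> 'a \<Rightarrow> 'e pmf) \<Rightarrow> ('x \<times> 'e \<Rightarrow> 'a pmf) \<Rightarrow> nat
    \<Rightarrow> ('x \<times> 'e \<Rightarrow> 'a) \<Rightarrow> ('x \<times> 'e \<Rightarrow> 'a \<Rightarrow> 'e pmf)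
    \<Rightarrow> ((('x \<times> 'e) \<times> 'a) list \<times> (('x \<times> 'e) \<times> 'a) list) list pmf" where
  "data_and_synth N \<nu> Pexo Pend \<pi>b H \<pi> Phat =
     iid N (bind_pmf (traj_law \<nu> (trans Pexo Pend) \<pi>b H)
              (\<lambda>\<tau>. bind_pmf (synth_traj \<pi> Phat \<tau>) (\<lambda>\<tau>'. return_pmf (\<tau>, \<tau>'))))"

definition J_hat :: "nat \<Rightarrow> (('x \<times> 'e) \<Rightarrow> 'a \<Rightarrow> real)
    \<Rightarrow> ((('x \<times> 'e) \<times> 'a) list \<times> (('x \<times> 'e) \<times> 'a) list) list \<Rightarrow> real" where
  "J_hat N r D = (1 / real N) * (\<Sum>i<N. ret r (snd (D ! i)))"

end

theory Submission
  imports Defs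
begin

lemma int_bdd:
  fixes f :: "'b \<Rightarrow> real"
  assumes "\<And>x. x \<in> set_pmf p \<Longrightarrow> \<bar>f x\<bar> \<le> B"
  shows "integrable (measure_pmf p) f"
  apply (rule measure_pmf.integrable_const_bound[where B=B])
  using assms by (auto intro: AE_pmfI)

lemma E_bind_pmf:
  fixes f :: "'c \<Rightarrow> real"
  assumes b: "\<And>x y. x \<in> set_pmf M \<Longrightarrow> y \<in> set_pmf (N x) \<Longrightarrow> \<bar>f y\<bar> \<le> B"
  shows "measure_pmf.expectation (bind_pmf M N) f
       = measure_pmf.expectation M (\<lambda>x. measure_pmf.expectation (N x) f)"
proof -
  define g where "g = (\<lambda>y. max (-B) (min B (f y)))"
  have gb: "\<bar>g y\<bar> \<le> \<bar>B\<bar>" for y unfolding g_def by auto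
  have 1: "measure_pmf.expectation (bind_pmf M N) f = measure_pmf.expectation (bind_pmf M N) g"
    apply (rule integral_cong_AE) apply simp apply simp
    apply (rule AE_pmfI) using b unfolding g_def by force
  have 2: "measure_pmf.expectation (bind_pmf M N) g
     = measure_pmf.expectation M (\<lambda>x. measure_pmf.expectation (N x) g)"
    unfolding measure_pmf_bind
    apply (rule integral_bind[where K="count_space UNIV" and B="\<bar>B\<bar>" and B'=1])
    using gb by (auto simp: measure_pmf.finite_measure_axioms measure_pmf.emeasure_space_1
         space_subprob_algebra intro!: prob_space_imp_subprob_space measure_pmf.prob_space_axioms)
  have 3: "measure_pmf.expectation M (\<lambda>x. measure_pmf.expectation (N x) g)
     = measure_pmf.expectation M (\<lambda>x. measure_pmf.expectation (N x) f)"
    apply (rule integral_cong_AE) apply simp apply simp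
    apply (rule AE_pmfI)
    apply (rule integral_cong_AE) apply simp apply simp
    apply (rule AE_pmfI) using b unfolding g_def by force
  show ?thesis using 1 2 3 by simp
qed

definition ex :: "'b::finite pmf \<Rightarrow> ('b \<Rightarrow> real) \<Rightarrow> real" where
  "ex p f = (\<Sum>x\<in>UNIV. pmf p x * f x)"

lemma expectation_ex: "measure_pmf.expectation (p::'b::finite pmf) f = ex p f"
  unfolding ex_def by (subst integral_measure_pmf_real[where A=UNIV]) (auto simp: mult.commute)

lemma sum_pmf1: "(\<Sum>x\<in>UNIV. pmf (p::'b::finite pmf) x) = 1"
  by (rule sum_pmf_eq_1) auto

lemma ex_const[simp]: "ex p (\<lambda>_. c) = c"
  unfolding ex_def by (simp add: sum_distrib_right[symmetric] sum_pmf1)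

lemma ex_add: "ex p (\<lambda>x. f x + g x) = ex p f + ex p g"
  unfolding ex_def by (simp add: distrib_left sum.distrib)

lemma ex_diff: "ex p f - ex p g = ex p (\<lambda>x. f x - g x)"
  unfolding ex_def by (simp add: right_diff_distrib sum_subtractf)

lemma ex_abs_le:
  assumes "\<And>x. \<bar>f x\<bar> \<le> d" shows "\<bar>ex p f\<bar> \<le> d"
proof -
  have "\<bar>ex p f\<bar> \<le> (\<Sum>x\<in>UNIV. \<bar>pmf p x * f x\<bar>)" unfolding ex_def by (rule sum_abs)
  also have "\<dots> \<le> (\<Sum>x\<in>UNIV. pmf p x * d)"
    by (rule sum_mono) (simp add: abs_mult assms mult_left_mono)
  also have "\<dots> = d" by (simp add: sum_distrib_right[symmetric] sum_pmf1)
  finally show ?thesis .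
qed

lemma ex_bounds:
  assumes "\<And>x. 0 \<le> f x \<and> f x \<le> B" shows "0 \<le> ex p f \<and> ex p f \<le> B"
proof
  show "0 \<le> ex p f" unfolding ex_def using assms by (intro sum_nonneg) auto
  have "ex p f \<le> (\<Sum>x\<in>UNIV. pmf p x * B)" unfolding ex_def
    by (rule sum_mono) (simp add: assms mult_left_mono)
  also have "\<dots> = B" by (simp add: sum_distrib_right[symmetric] sum_pmf1)
  finally show "ex p f \<le> B" .
qed

lemma ex_tv:
  assumes "\<And>x. 0 \<le> f x \<and> f x \<le> B"
  shows "\<bar>ex p f - ex q f\<bar> \<le> B * tv_dist p q"
proof -
  have "ex p f - ex q f = (\<Sum>x\<in>UNIV. (pmf p x - pmf q x) * f x)"
    unfolding ex_def by (simp add: left_diff_distrib sum_subtractf)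
  also have "\<dots> = (\<Sum>x\<in>UNIV. (pmf p x - pmf q x) * (f x - B/2))"
  proof -
    have "(\<Sum>x\<in>UNIV. (pmf p x - pmf q x) * (B/2)) = (\<Sum>x\<in>UNIV. (pmf p x - pmf q x)) * (B/2)"
      by (rule sum_distrib_right[symmetric])
    also have "(\<Sum>x\<in>UNIV. (pmf p x - pmf q x)) = 0" by (simp add: sum_subtractf sum_pmf1)
    finally have "(\<Sum>x\<in>UNIV. (pmf p x - pmf q x) * (B/2)) = 0" by simp
    then show ?thesis by (simp add: right_diff_distrib sum_subtractf)
  qed
  finally have "\<bar>ex p f - ex q f\<bar> \<le> (\<Sum>x\<in>UNIV. \<bar>(pmf p x - pmf q x) * (f x - B/2)\<bar>)"
    using sum_abs by metis
  also have "\<dots> \<le> (\<Sum>x\<in>UNIV. \<bar>pmf p x - pmf q x\<bar> * (B/2))"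
    apply (rule sum_mono) unfolding abs_mult subgoal for x apply (rule mult_left_mono)
    using assms[of x] by (auto simp: abs_if split: if_splits) done
  also have "\<dots> = B * tv_dist p q" unfolding tv_dist_def sum_distrib_right[symmetric] by simp
  finally show ?thesis .
qed

lemma sum_UNIV_pair: "(\<Sum>z\<in>UNIV. h z) = (\<Sum>x\<in>UNIV. \<Sum>y\<in>UNIV. (h (x,y)::real))"
proof -
  have "(\<Sum>x\<in>UNIV. \<Sum>y\<in>UNIV. (h (x,y)::real)) = (\<Sum>(x,y)\<in>UNIV \<times> UNIV. h (x,y))"
    by (rule sum.cartesian_product)
  then show ?thesis by simp
qed

lemma ex_pair: "ex (pair_pmf p q) f = ex p (\<lambda>x. ex q (\<lambda>y. f (x, y)))"
  unfolding ex_def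
  by (subst sum_UNIV_pair) (simp add: sum_distrib_left mult.assoc pmf_pair)


lemma ret_Nil[simp]: "ret r [] = 0" unfolding ret_def by simp
lemma ret_Cons[simp]: "ret r ((s,a)#t) = r s a + ret r t" unfolding ret_def by simp

lemma ret_bd:
  assumes rb: "\<And>s a. 0 \<le> r s a \<and> r s a \<le> rmax"
  shows "0 \<le> ret r \<tau> \<and> ret r \<tau> \<le> real (length \<tau>) * rmax"
proof (induction \<tau>)
  case Nil then show ?case by simp
next
  case (Cons p t) then show ?case using rb[of "fst p" "snd p"]
    by (cases p) (auto simp: algebra_simps)
qed

lemma ret_abs_bd:
  assumes rb: "\<And>s a. 0 \<le> r s a \<and> r s a \<le> rmax" and "length \<tau> \<le> n"
  shows "\<bar>ret r \<tau>\<bar> \<le> real n * rmax"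
proof -
  have "0 \<le> rmax" using rb[of undefined undefined] by simp
  then have "real (length \<tau>) * rmax \<le> real n * rmax" using assms(2) by (simp add: mult_right_mono)
  moreover have "0 \<le> ret r \<tau> \<and> ret r \<tau> \<le> real (length \<tau>) * rmax" by (rule ret_bd) (rule rb)
  ultimately show ?thesis by simp
qed

lemma traj_set:
  "\<tau> \<in> set_pmf (traj P pol n s) \<Longrightarrow> length \<tau> = n \<and> (\<forall>h t. \<tau> = h # t \<longrightarrow> fst h = s)"
  by (induction n arbitrary: s \<tau>) auto

lemma synth_len: "y \<in> set_pmf (synth \<pi> Phat s xs) \<Longrightarrow> length y = Suc (length xs)"
  by (induction xs arbitrary: s y) auto

definition syn where
  "syn \<pi> Phat e \<tau> = (case \<tau> of [] \<Rightarrow> return_pmf []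
      | (s, a) # rest \<Rightarrow> synth \<pi> Phat (fst s, e) (map (\<lambda>(s', a'). fst s') rest))"

lemma syn_len: "y \<in> set_pmf (syn \<pi> Phat e \<tau>) \<Longrightarrow> length y = length \<tau>"
  unfolding syn_def by (auto split: list.splits dest: synth_len)

lemma synth_traj_len: "y \<in> set_pmf (synth_traj \<pi> Phat \<tau>) \<Longrightarrow> length y = length \<tau>"
  unfolding synth_traj_def by (auto split: list.splits dest: synth_len)

fun Vf :: "('s::finite \<Rightarrow> 'a \<Rightarrow> 's pmf) \<Rightarrow> ('s \<Rightarrow> 'a \<Rightarrow> real) \<Rightarrow> ('s \<Rightarrow> 'a) \<Rightarrow> nat \<Rightarrow> 's \<Rightarrow> real" where
  "Vf P r \<pi> 0 s = 0"
| "Vf P r \<pi> (Suc n) s = r s (\<pi> s) + ex (P s (\<pi> s)) (Vf P r \<pi> n)"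

fun Wf :: "('x::finite \<times> 'e::finite \<Rightarrow> 'a::finite \<Rightarrow> ('x \<times> 'e) pmf) \<Rightarrow> ('x \<times> 'e \<Rightarrow> 'a \<Rightarrow> 'e pmf)
   \<Rightarrow> ('x \<times> 'e \<Rightarrow> 'a pmf) \<Rightarrow> ('x \<times> 'e \<Rightarrow> 'a \<Rightarrow> real) \<Rightarrow> ('x \<times> 'e \<Rightarrow> 'a) \<Rightarrow> nat
   \<Rightarrow> 'x \<times> 'e \<Rightarrow> 'e \<Rightarrow> real" where
  "Wf P Phat \<pi>b r \<pi> 0 s e = 0"
| "Wf P Phat \<pi>b r \<pi> (Suc n) s e = r (fst s, e) (\<pi> (fst s, e)) +
     ex (\<pi>b s) (\<lambda>a. ex (P s a) (\<lambda>s'. ex (Phat (fst s, e) (\<pi> (fst s, e))) (\<lambda>e'. Wf P Phat \<pi>b r \<pi> n s' e')))"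

lemma LV:
  assumes rb: "\<And>s a. 0 \<le> r s a \<and> r s a \<le> rmax"
  shows "measure_pmf.expectation (traj P (\<lambda>s. return_pmf (\<pi> s)) n s) (ret r) = Vf P r \<pi> n s"
proof (induction n arbitrary: s)
  case 0 then show ?case by simp
next
  case (Suc n)
  have "measure_pmf.expectation (traj P (\<lambda>s. return_pmf (\<pi> s)) (Suc n) s) (ret r)
     = measure_pmf.expectation (P s (\<pi> s)) (\<lambda>s'. measure_pmf.expectation
         (bind_pmf (traj P (\<lambda>s. return_pmf (\<pi> s)) n s') (\<lambda>rest. return_pmf ((s, \<pi> s) # rest))) (ret r))"
    apply (simp add: bind_return_pmf)
    apply (rule E_bind_pmf[where B="real (Suc n) * rmax"])
    apply (rule ret_abs_bd[OF rb]) by (auto dest: traj_set)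
  also have "\<dots> = measure_pmf.expectation (P s (\<pi> s)) (\<lambda>s'. r s (\<pi> s) + Vf P r \<pi> n s')"
  proof -
    have "measure_pmf.expectation
         (bind_pmf (traj P (\<lambda>s. return_pmf (\<pi> s)) n s') (\<lambda>rest. return_pmf ((s, \<pi> s) # rest))) (ret r)
        = r s (\<pi> s) + Vf P r \<pi> n s'" for s'
    proof -
      have "measure_pmf.expectation
         (bind_pmf (traj P (\<lambda>s. return_pmf (\<pi> s)) n s') (\<lambda>rest. return_pmf ((s, \<pi> s) # rest))) (ret r)
        = measure_pmf.expectation (traj P (\<lambda>s. return_pmf (\<pi> s)) n s') (\<lambda>rest. r s (\<pi> s) + ret r rest)"
        apply (subst E_bind_pmf[where B="real (Suc n) * rmax"])
        apply (rule ret_abs_bd[OF rb]) by (auto dest: traj_set)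
      also have "\<dots> = r s (\<pi> s) + measure_pmf.expectation (traj P (\<lambda>s. return_pmf (\<pi> s)) n s') (ret r)"
        apply (subst Bochner_Integration.integral_add) apply simp
         apply (rule int_bdd[where B="real n * rmax"]) apply (rule ret_abs_bd[OF rb])
        by (auto dest: traj_set)
      finally show ?thesis using Suc by simp
    qed
    then show ?thesis by simp
  qed
  also have "\<dots> = Vf P r \<pi> (Suc n) s"
    by (simp add: expectation_ex ex_add)
  finally show ?case .
qed


lemma E_abs_bd:
  fixes f :: "'b \<Rightarrow> real"
  assumes "\<And>x. x \<in> set_pmf p \<Longrightarrow> \<bar>f x\<bar> \<le> B"
  shows "\<bar>measure_pmf.expectation p f\<bar> \<le> B"
proof -
  have "\<bar>measure_pmf.expectation p f\<bar> \<le> measure_pmf.expectation p (\<lambda>x. \<bar>f x\<bar>)"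
    by (rule integral_abs_bound)
  also have "\<dots> \<le> measure_pmf.expectation p (\<lambda>x. B)"
    apply (rule integral_mono_AE)
      apply (rule int_bdd[where B=B]) using assms apply simp
     apply simp
    apply (rule AE_pmfI) using assms by simp
  also have "\<dots> = B" by simp
  finally show ?thesis .
qed

lemma F_bd:
  assumes rb: "\<And>s a. 0 \<le> r s a \<and> r s a \<le> rmax"
  shows "\<bar>measure_pmf.expectation (syn \<pi> Phat e \<tau>) (ret r)\<bar> \<le> real (length \<tau>) * rmax"
  apply (rule E_abs_bd) apply (rule ret_abs_bd[OF rb]) by (auto dest: syn_len)

lemma F_cons:
  assumes rb: "\<And>s a. 0 \<le> r s a \<and> r s a \<le> rmax"
  shows "measure_pmf.expectation (syn \<pi> Phat e ((s,a)#rest)) (ret r)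
   = r (fst s,e) (\<pi> (fst s,e)) + (case rest of [] \<Rightarrow> 0 | _ \<Rightarrow>
       ex (Phat (fst s,e) (\<pi> (fst s,e))) (\<lambda>e'. measure_pmf.expectation (syn \<pi> Phat e' rest) (ret r)))"
proof (cases rest)
  case Nil then show ?thesis by (simp add: syn_def)
next
  case (Cons p rest')
  obtain s' a' where p: "p = (s', a')" by (cases p)
  let ?st = "(fst s, e)"
  let ?m = "map (\<lambda>(s', a'). fst s') rest'"
  have "measure_pmf.expectation (syn \<pi> Phat e ((s,a)#rest)) (ret r)
     = measure_pmf.expectation (bind_pmf (Phat ?st (\<pi> ?st)) (\<lambda>e'. bind_pmf (synth \<pi> Phat (fst s', e') ?m)
          (\<lambda>rest. return_pmf ((?st, \<pi> ?st) # rest)))) (ret r)"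
    by (simp add: syn_def Cons p)
  also have "\<dots> = measure_pmf.expectation (Phat ?st (\<pi> ?st)) (\<lambda>e'.
      measure_pmf.expectation (bind_pmf (synth \<pi> Phat (fst s', e') ?m)
          (\<lambda>rest. return_pmf ((?st, \<pi> ?st) # rest))) (ret r))"
    apply (rule E_bind_pmf[where B="real (Suc (Suc (length rest'))) * rmax"])
    apply (rule ret_abs_bd[OF rb]) by (auto dest: synth_len)
  also have "\<dots> = measure_pmf.expectation (Phat ?st (\<pi> ?st)) (\<lambda>e'.
      r ?st (\<pi> ?st) + measure_pmf.expectation (syn \<pi> Phat e' rest) (ret r))"
  proof -
    have "measure_pmf.expectation (bind_pmf (synth \<pi> Phat (fst s', e') ?m)
          (\<lambda>rest. return_pmf ((?st, \<pi> ?st) # rest))) (ret r)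
        = r ?st (\<pi> ?st) + measure_pmf.expectation (syn \<pi> Phat e' rest) (ret r)" for e'
    proof -
      have "measure_pmf.expectation (bind_pmf (synth \<pi> Phat (fst s', e') ?m)
          (\<lambda>rest. return_pmf ((?st, \<pi> ?st) # rest))) (ret r)
        = measure_pmf.expectation (synth \<pi> Phat (fst s', e') ?m) (\<lambda>y. r ?st (\<pi> ?st) + ret r y)"
        apply (subst E_bind_pmf[where B="real (Suc (Suc (length rest'))) * rmax"])
        apply (rule ret_abs_bd[OF rb]) by (auto dest: synth_len)
      also have "\<dots> = r ?st (\<pi> ?st) + measure_pmf.expectation (synth \<pi> Phat (fst s', e') ?m) (ret r)"
        apply (subst Bochner_Integration.integral_add) apply simp
         apply (rule int_bdd[where B="real (Suc (length rest')) * rmax"]) apply (rule ret_abs_bd[OF rb])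
        by (auto dest: synth_len)
      finally show ?thesis by (simp add: syn_def Cons p)
    qed
    then show ?thesis by simp
  qed
  also have "\<dots> = r ?st (\<pi> ?st) + ex (Phat ?st (\<pi> ?st)) (\<lambda>e'. measure_pmf.expectation (syn \<pi> Phat e' rest) (ret r))"
    by (simp add: expectation_ex ex_add)
  finally show ?thesis by (simp add: Cons)
qed


lemma E_ex_swap:
  fixes Q :: "'e::finite pmf" and G :: "'e \<Rightarrow> 'b \<Rightarrow> real"
  assumes "\<And>e. integrable (measure_pmf T) (G e)"
  shows "measure_pmf.expectation T (\<lambda>x. ex Q (\<lambda>e. G e x)) = ex Q (\<lambda>e. measure_pmf.expectation T (G e))"
  unfolding ex_def by (subst Bochner_Integration.integral_sum) (auto simp: assms)

lemma F_bd':
  assumes rb: "\<And>s a. 0 \<le> r s a \<and> r s a \<le> rmax" and "length \<tau> \<le> m"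
  shows "\<bar>measure_pmf.expectation (syn \<pi> Phat e \<tau>) (ret r)\<bar> \<le> real m * rmax"
  apply (rule E_abs_bd) apply (rule ret_abs_bd[OF rb]) using assms(2) by (auto dest: syn_len)

lemma LW:
  assumes rb: "\<And>s a. 0 \<le> r s a \<and> r s a \<le> rmax"
  shows "measure_pmf.expectation (traj P \<pi>b n s) (\<lambda>\<tau>. measure_pmf.expectation (syn \<pi> Phat e \<tau>) (ret r))
       = Wf P Phat \<pi>b r \<pi> n s e"
proof (induction n arbitrary: s e)
  case 0 then show ?case by (simp add: syn_def)
next
  case (Suc n)
  let ?F = "\<lambda>e \<tau>. measure_pmf.expectation (syn \<pi> Phat e \<tau>) (ret r)"
  let ?st = "(fst s, e)"
  let ?Q = "Phat ?st (\<pi> ?st)"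
  have step3: "measure_pmf.expectation (traj P \<pi>b n s') (\<lambda>rest. ?F e ((s,a)#rest))
      = r ?st (\<pi> ?st) + ex ?Q (\<lambda>e'. Wf P Phat \<pi>b r \<pi> n s' e')" for a s'
  proof (cases n)
    case 0 then show ?thesis by (simp add: F_cons[OF rb])
  next
    case (Suc m)
    have "measure_pmf.expectation (traj P \<pi>b n s') (\<lambda>rest. ?F e ((s,a)#rest))
       = measure_pmf.expectation (traj P \<pi>b n s') (\<lambda>rest. r ?st (\<pi> ?st) + ex ?Q (\<lambda>e'. ?F e' rest))"
      apply (rule integral_cong_AE) apply simp apply simp
      apply (rule AE_pmfI) apply (subst F_cons[OF rb])
      using traj_set[of _ P \<pi>b n s'] Suc by (auto split: list.splits)
    also have "\<dots> = r ?st (\<pi> ?st) + measure_pmf.expectation (traj P \<pi>b n s') (\<lambda>rest. ex ?Q (\<lambda>e'. ?F e' rest))"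
      apply (subst Bochner_Integration.integral_add) apply simp
       apply (rule int_bdd[where B="real n * rmax"]) apply (rule ex_abs_le)
       apply (rule F_bd'[OF rb])
      by (auto dest: traj_set)
    also have "\<dots> = r ?st (\<pi> ?st) + ex ?Q (\<lambda>e'. measure_pmf.expectation (traj P \<pi>b n s') (?F e'))"
      apply (subst E_ex_swap) apply (rule int_bdd[where B="real n * rmax"])
       apply (rule F_bd'[OF rb]) by (auto dest: traj_set)
    also have "\<dots> = r ?st (\<pi> ?st) + ex ?Q (\<lambda>e'. Wf P Phat \<pi>b r \<pi> n s' e')"
      using Suc.IH by simp
    finally show ?thesis .
  qed
  have "measure_pmf.expectation (traj P \<pi>b (Suc n) s) (?F e)
     = measure_pmf.expectation (\<pi>b s) (\<lambda>a. measure_pmf.expectation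
         (bind_pmf (P s a) (\<lambda>s'. bind_pmf (traj P \<pi>b n s') (\<lambda>rest. return_pmf ((s, a) # rest)))) (?F e))"
    apply simp
    apply (rule E_bind_pmf[where B="real (Suc n) * rmax"])
    apply (rule F_bd'[OF rb]) by (auto dest: traj_set)
  also have "\<dots> = measure_pmf.expectation (\<pi>b s) (\<lambda>a. measure_pmf.expectation (P s a) (\<lambda>s'.
         measure_pmf.expectation (traj P \<pi>b n s') (\<lambda>rest. ?F e ((s,a)#rest))))"
  proof -
    have "measure_pmf.expectation
         (bind_pmf (P s a) (\<lambda>s'. bind_pmf (traj P \<pi>b n s') (\<lambda>rest. return_pmf ((s, a) # rest)))) (?F e)
       = measure_pmf.expectation (P s a) (\<lambda>s'.
         measure_pmf.expectation (traj P \<pi>b n s') (\<lambda>rest. ?F e ((s,a)#rest)))" for a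
      apply (subst E_bind_pmf[where B="real (Suc n) * rmax"])
       apply (rule F_bd'[OF rb]) apply (force dest: traj_set)
      apply (subst E_bind_pmf[where B="real (Suc n) * rmax"])
       apply (rule F_bd'[OF rb]) apply (force dest: traj_set)
      by simp
    then show ?thesis by simp
  qed
  also have "\<dots> = Wf P Phat \<pi>b r \<pi> (Suc n) s e"
    by (simp add: step3 expectation_ex ex_add)
  finally show ?case .
qed


lemma tv_nonneg: "0 \<le> tv_dist p q" unfolding tv_dist_def by (simp add: sum_nonneg)

lemma V_bd:
  assumes rb: "\<And>s a. 0 \<le> r s a \<and> r s a \<le> rmax"
  shows "0 \<le> Vf P r \<pi> n s \<and> Vf P r \<pi> n s \<le> real n * rmax"
proof (induction n arbitrary: s)
  case 0 then show ?case by simp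
next
  case (Suc n)
  have "0 \<le> ex (P s (\<pi> s)) (Vf P r \<pi> n) \<and> ex (P s (\<pi> s)) (Vf P r \<pi> n) \<le> real n * rmax"
    by (rule ex_bounds) (rule Suc.IH)
  then show ?case using rb[of s "\<pi> s"] by (simp add: algebra_simps)
qed

lemma prod_tv:
  assumes "\<And>x y. 0 \<le> g x y \<and> g x y \<le> B"
  shows "\<bar>ex p1 (\<lambda>x. ex q1 (\<lambda>y. g x y)) - ex p2 (\<lambda>x. ex q2 (\<lambda>y. g x y))\<bar>
     \<le> B * tv_dist q1 q2 + B * tv_dist p1 p2"
proof -
  have 1: "\<bar>ex p1 (\<lambda>x. ex q1 (\<lambda>y. g x y)) - ex p1 (\<lambda>x. ex q2 (\<lambda>y. g x y))\<bar> \<le> B * tv_dist q1 q2"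
    unfolding ex_diff by (rule ex_abs_le) (rule ex_tv, rule assms)
  have 2: "\<bar>ex p1 (\<lambda>x. ex q2 (\<lambda>y. g x y)) - ex p2 (\<lambda>x. ex q2 (\<lambda>y. g x y))\<bar> \<le> B * tv_dist p1 p2"
    by (rule ex_tv) (rule ex_bounds, rule assms)
  show ?thesis using 1 2 by linarith
qed

lemma ex_mix:
  assumes "\<And>a. \<bar>h a - c\<bar> \<le> d" shows "\<bar>ex p h - c\<bar> \<le> d"
proof -
  have "ex p h - c = ex p (\<lambda>a. h a - c)" using ex_diff[of p h "\<lambda>_. c"] by simp
  then show ?thesis using ex_abs_le[of "\<lambda>a. h a - c" d p] assms by simp
qed

lemma sim:
  fixes Pexo :: "'x::finite \<Rightarrow> 'a::finite \<Rightarrow> 'x pmf" and Pend Phat :: "'x \<times> 'e::finite \<Rightarrow> 'a \<Rightarrow> 'e pmf"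
  assumes rb: "\<And>s a. 0 \<le> r s a \<and> r s a \<le> rmax"
    and air: "AIR eps_air Pexo"
    and model: "\<And>s a. tv_dist (Pend s a) (Phat s a) \<le> eps_p"
  shows "\<bar>Wf (trans Pexo Pend) Phat \<pi>b r \<pi> n s e - Vf (trans Pexo Pend) r \<pi> n (fst s, e)\<bar>
     \<le> real n * real n * rmax * (eps_air + eps_p)"
proof (induction n arbitrary: s e)
  case 0 then show ?case by simp
next
  case (Suc n)
  let ?P = "trans Pexo Pend"
  let ?st = "(fst s, e)"
  let ?Q = "Phat ?st (\<pi> ?st)"
  let ?U = "Vf ?P r \<pi> n"
  let ?W = "Wf ?P Phat \<pi>b r \<pi> n"
  have rm: "0 \<le> rmax" using rb[of undefined undefined] by simp
  have ea: "0 \<le> eps_air" using air tv_nonneg unfolding AIR_def by (meson order_trans)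
  have ep: "0 \<le> eps_p" using model tv_nonneg by (meson order_trans)
  have Ub: "0 \<le> ?U (x, y) \<and> ?U (x, y) \<le> real n * rmax" for x y by (rule V_bd[OF rb])
  have t1: "\<bar>ex (\<pi>b s) (\<lambda>a. ex (?P s a) (\<lambda>s'. ex ?Q (\<lambda>e'. ?W s' e')))
      - ex (\<pi>b s) (\<lambda>a. ex (?P s a) (\<lambda>s'. ex ?Q (\<lambda>e'. ?U (fst s', e'))))\<bar>
      \<le> real n * real n * rmax * (eps_air + eps_p)"
    unfolding ex_diff by (intro ex_abs_le) (rule Suc.IH)
  have eq: "ex (?P s a) (\<lambda>s'. ex ?Q (\<lambda>e'. ?U (fst s', e')))
      = ex (Pexo (fst s) a) (\<lambda>x'. ex ?Q (\<lambda>e'. ?U (x', e')))" for a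
    by (simp add: trans_def ex_pair)
  have eq2: "ex (?P ?st (\<pi> ?st)) ?U = ex (Pexo (fst s) (\<pi> ?st)) (\<lambda>x'. ex (Pend ?st (\<pi> ?st)) (\<lambda>e'. ?U (x', e')))"
    by (simp add: trans_def ex_pair)
  have t2: "\<bar>ex (\<pi>b s) (\<lambda>a. ex (?P s a) (\<lambda>s'. ex ?Q (\<lambda>e'. ?U (fst s', e')))) - ex (?P ?st (\<pi> ?st)) ?U\<bar>
      \<le> real n * rmax * eps_p + real n * rmax * eps_air"
    unfolding eq eq2
  proof (rule ex_mix)
    fix a
    have "\<bar>ex (Pexo (fst s) a) (\<lambda>x'. ex ?Q (\<lambda>e'. ?U (x', e'))) -
          ex (Pexo (fst s) (\<pi> ?st)) (\<lambda>x'. ex (Pend ?st (\<pi> ?st)) (\<lambda>e'. ?U (x', e')))\<bar>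
        \<le> real n * rmax * tv_dist ?Q (Pend ?st (\<pi> ?st)) + real n * rmax * tv_dist (Pexo (fst s) a) (Pexo (fst s) (\<pi> ?st))"
      by (rule prod_tv) (rule Ub)
    also have "\<dots> \<le> real n * rmax * eps_p + real n * rmax * eps_air"
    proof (rule add_mono; rule mult_left_mono)
      have "tv_dist ?Q (Pend ?st (\<pi> ?st)) = tv_dist (Pend ?st (\<pi> ?st)) ?Q"
        unfolding tv_dist_def by (simp add: abs_minus_commute)
      then show "tv_dist ?Q (Pend ?st (\<pi> ?st)) \<le> eps_p" using model by simp
      show "tv_dist (Pexo (fst s) a) (Pexo (fst s) (\<pi> ?st)) \<le> eps_air" using air unfolding AIR_def by blast
    qed (use rm in auto)
    finally show "\<bar>ex (Pexo (fst s) a) (\<lambda>x'. ex ?Q (\<lambda>e'. ?U (x', e'))) -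
          ex (Pexo (fst s) (\<pi> ?st)) (\<lambda>x'. ex (Pend ?st (\<pi> ?st)) (\<lambda>e'. ?U (x', e')))\<bar>
        \<le> real n * rmax * eps_p + real n * rmax * eps_air" .
  qed
  have fin: "real n * real n * rmax * (eps_air + eps_p) + (real n * rmax * eps_p + real n * rmax * eps_air)
     \<le> real (Suc n) * real (Suc n) * rmax * (eps_air + eps_p)"
  proof -
    have "0 \<le> rmax * (eps_air + eps_p)" using rm ea ep by simp
    moreover have "real n * real n + real n \<le> real (Suc n) * real (Suc n)" by (simp add: algebra_simps)
    ultimately have "(real n * real n + real n) * (rmax * (eps_air + eps_p))
        \<le> real (Suc n) * real (Suc n) * (rmax * (eps_air + eps_p))" by (rule mult_right_mono[rotated])
    then show ?thesis by (simp add: algebra_simps)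
  qed
  have "Wf ?P Phat \<pi>b r \<pi> (Suc n) s e - Vf ?P r \<pi> (Suc n) ?st
     = ex (\<pi>b s) (\<lambda>a. ex (?P s a) (\<lambda>s'. ex ?Q (\<lambda>e'. ?W s' e'))) - ex (?P ?st (\<pi> ?st)) ?U"
    by simp
  then show ?case using t1 t2 fin by linarith
qed


lemma iid_Pi:
  "iid N p = map_pmf (\<lambda>f. map f [k..<k+N]) (Pi_pmf {k..<k+N} d (\<lambda>_. p))"
proof (induction N arbitrary: k)
  case 0 then show ?case by simp
next
  case (Suc N)
  have ins: "{k..<k + Suc N} = insert k {Suc k..<Suc k + N}" by auto
  have m: "map (f(k := y)) [k..<k + Suc N] = y # map f [Suc k..<Suc k + N]" for f y
  proof -
    have "[k..<k + Suc N] = k # [Suc k..<Suc k + N]" by (simp add: upt_conv_Cons)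
    moreover have "map (f(k := y)) [Suc k..<Suc k + N] = map f [Suc k..<Suc k + N]" by simp
    ultimately show ?thesis by simp
  qed
  show ?case
    unfolding ins
    apply (subst Pi_pmf_insert') apply simp apply simp
    apply (simp only: map_bind_pmf map_return_pmf m iid.simps Suc.IH[of "Suc k"] bind_map_pmf)
    done
qed

lemma hoeff:
  fixes p :: "'b pmf" and g :: "'b \<Rightarrow> real"
  assumes gb: "\<And>x. x \<in> set_pmf p \<Longrightarrow> 0 \<le> g x \<and> g x \<le> B"
    and N: "N > 0" and z: "0 < \<zeta>" "\<zeta> < 1"
  shows "measure_pmf.prob (iid N p)
     {D. \<bar>(1 / real N) * (\<Sum>i<N. g (D ! i)) - measure_pmf.expectation p g\<bar>
         \<le> B * sqrt (ln (2 / \<zeta>) / (2 * real N))} \<ge> 1 - \<zeta>"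
proof -
  define t where "t = sqrt (ln (2 / \<zeta>) / (2 * real N))"
  define \<mu> where "\<mu> = measure_pmf.expectation p g"
  define M where "M = Pi_pmf {0..<N} undefined (\<lambda>_::nat. p)"
  define E where "E = {f. \<bar>(1 / real N) * (\<Sum>i<N. g (f i)) - \<mu>\<bar> \<le> B * t}"
  have "iid N p = map_pmf (\<lambda>f. map f [0..<N]) M" unfolding M_def using iid_Pi[of N p 0 undefined] by simp
  moreover have "(\<lambda>f. map f [0..<N]) -` {D. \<bar>(1 / real N) * (\<Sum>i<N. g (D ! i)) - \<mu>\<bar> \<le> B * t} = E"
    unfolding E_def by auto
  ultimately have red: "measure_pmf.prob (iid N p)
     {D. \<bar>(1 / real N) * (\<Sum>i<N. g (D ! i)) - \<mu>\<bar> \<le> B * t} = measure_pmf.prob M E"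
    by simp
  have supp: "f \<in> set_pmf M \<Longrightarrow> i < N \<Longrightarrow> f i \<in> set_pmf p" for f i
    unfolding M_def set_Pi_pmf[OF finite_atLeastLessThan] PiE_dflt_def by auto
  have comp: "measure_pmf.expectation M (\<lambda>f. g (f i)) = \<mu>" if "i < N" for i
  proof -
    have "measure_pmf.expectation M (\<lambda>f. g (f i)) = measure_pmf.expectation (map_pmf (\<lambda>f. f i) M) g"
      by simp
    also have "map_pmf (\<lambda>f. f i) M = p" unfolding M_def using that by (subst Pi_pmf_component) auto
    finally show ?thesis unfolding \<mu>_def .
  qed
  obtain x0 where "x0 \<in> set_pmf p" using set_pmf_not_empty[of p] by blast
  then have B0: "0 \<le> B" using gb by force
  show ?thesis
  proof (cases "B = 0")
    case True
    have "\<mu> = measure_pmf.expectation p (\<lambda>_. 0)" unfolding \<mu>_def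
      apply (rule integral_cong_AE) apply simp apply simp apply (rule AE_pmfI) using gb True by force
    then have mu0: "\<mu> = 0" by simp
    have "AE f in M. f \<in> E"
    proof (rule AE_pmfI)
      fix f assume f: "f \<in> set_pmf M"
      have "(\<Sum>i<N. g (f i)) = 0"
        apply (rule sum.neutral) using supp[OF f] gb True by force
      then show "f \<in> E" unfolding E_def using mu0 True by simp
    qed
    then have "measure_pmf.prob M E = 1" by (subst measure_pmf.prob_eq_1) auto
    then show ?thesis using red z unfolding t_def \<mu>_def by simp
  next
    case False
    then have Bp: "B > 0" using B0 by simp
    interpret H: Hoeffding_ineq "measure_pmf M" "{0..<N}" "\<lambda>i f. g (f i)" "\<lambda>_. 0" "\<lambda>_. B"
      "\<Sum>i\<in>{0..<N}. measure_pmf.expectation M (\<lambda>f. g (f i))"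
    proof unfold_locales
      show "finite {0..<N}" by simp
      show "prob_space.indep_vars (measure_pmf M) (\<lambda>_. borel) (\<lambda>i f. g (f i)) {0..<N}"
        apply (rule prob_space.indep_vars_compose2[OF measure_pmf.prob_space_axioms, where M'="\<lambda>_. count_space UNIV" and X="\<lambda>i f. f i"])
        unfolding M_def by (rule indep_vars_Pi_pmf) auto
      show "AE x in measure_pmf M. g (x i) \<in> {0..B}" if "i \<in> {0..<N}" for i
        apply (rule AE_pmfI) using supp gb that by force
    qed
    have musum: "(\<Sum>i\<in>{0..<N}. measure_pmf.expectation M (\<lambda>f. g (f i))) = real N * \<mu>"
      using comp by simp
    define \<epsilon> where "\<epsilon> = real N * B * t"
    have lnpos: "0 < ln (2 / \<zeta>)" using z by simp
    have lnn: "0 \<le> ln (2 / \<zeta>) / (2 * real N)" using lnpos N by (intro divide_nonneg_pos) auto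
    then have t2: "t\<^sup>2 = ln (2 / \<zeta>) / (2 * real N)" unfolding t_def by simp
    have tnn: "0 \<le> t" unfolding t_def using lnn by simp
    have "measure_pmf.prob M {x \<in> space M. \<bar>(\<Sum>i\<in>{0..<N}. g (x i)) - real N * \<mu>\<bar> \<ge> \<epsilon>}
       \<le> 2 * exp (-2 * \<epsilon>\<^sup>2 / (\<Sum>i\<in>{0..<N}. (B - 0)\<^sup>2))"
      using H.Hoeffding_ineq_abs_ge[of \<epsilon>] musum Bp N tnn unfolding \<epsilon>_def by simp
    also have "-2 * \<epsilon>\<^sup>2 / (\<Sum>i\<in>{0..<N}. (B - 0)\<^sup>2) = - ln (2 / \<zeta>)"
      unfolding \<epsilon>_def using N Bp t2 by (simp add: power_mult_distrib power2_eq_square field_simps)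
    also have "2 * exp (- ln (2 / \<zeta>)) = \<zeta>"
      using z by (simp add: exp_minus)
    finally have bad: "measure_pmf.prob M {x \<in> space M. \<bar>(\<Sum>i\<in>{0..<N}. g (x i)) - real N * \<mu>\<bar> \<ge> \<epsilon>} \<le> \<zeta>" .
    have sub: "space M - {x \<in> space M. \<bar>(\<Sum>i\<in>{0..<N}. g (x i)) - real N * \<mu>\<bar> \<ge> \<epsilon>} \<subseteq> E"
    proof
      fix f assume "f \<in> space M - {x \<in> space M. \<bar>(\<Sum>i\<in>{0..<N}. g (x i)) - real N * \<mu>\<bar> \<ge> \<epsilon>}"
      then have lt: "\<bar>(\<Sum>i\<in>{0..<N}. g (f i)) - real N * \<mu>\<bar> < \<epsilon>" by auto
      have "(1 / real N) * (\<Sum>i<N. g (f i)) - \<mu> = ((\<Sum>i\<in>{0..<N}. g (f i)) - real N * \<mu>) / real N"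
        using N by (simp add: field_simps atLeast0LessThan)
      then have "\<bar>(1 / real N) * (\<Sum>i<N. g (f i)) - \<mu>\<bar> = \<bar>(\<Sum>i\<in>{0..<N}. g (f i)) - real N * \<mu>\<bar> / real N"
        by simp
      also have "\<dots> \<le> \<epsilon> / real N" using lt N by (simp add: divide_right_mono)
      also have "\<dots> = B * t" unfolding \<epsilon>_def using N by simp
      finally show "f \<in> E" unfolding E_def by simp
    qed
    have "measure_pmf.prob M (space M - {x \<in> space M. \<bar>(\<Sum>i\<in>{0..<N}. g (x i)) - real N * \<mu>\<bar> \<ge> \<epsilon>})
        = 1 - measure_pmf.prob M {x \<in> space M. \<bar>(\<Sum>i\<in>{0..<N}. g (x i)) - real N * \<mu>\<bar> \<ge> \<epsilon>}"
      by (rule measure_pmf.prob_compl) simp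
    moreover have "measure_pmf.prob M (space M - {x \<in> space M. \<bar>(\<Sum>i\<in>{0..<N}. g (x i)) - real N * \<mu>\<bar> \<ge> \<epsilon>})
        \<le> measure_pmf.prob M E"
      by (rule measure_pmf.finite_measure_mono[OF sub]) simp
    ultimately have "measure_pmf.prob M E \<ge> 1 - \<zeta>" using bad by linarith
    then show ?thesis using red unfolding t_def \<mu>_def by simp
  qed
qed


lemma synth_traj_syn:
  "\<tau> \<in> set_pmf (traj P pol n s0) \<Longrightarrow> synth_traj \<pi> Phat \<tau> = syn \<pi> Phat (snd s0) \<tau>"
  using traj_set[of \<tau> P pol n s0] unfolding synth_traj_def syn_def by (auto split: list.splits)

lemma mean_eq:
  assumes rb: "\<And>s a. 0 \<le> r s a \<and> r s a \<le> rmax"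
  shows "measure_pmf.expectation (bind_pmf (traj_law \<nu> P \<pi>b H)
            (\<lambda>\<tau>. bind_pmf (synth_traj \<pi> Phat \<tau>) (\<lambda>\<tau>'. return_pmf (\<tau>, \<tau>')))) (\<lambda>D. ret r (snd D))
       = ex \<nu> (\<lambda>s0. Wf P Phat \<pi>b r \<pi> H s0 (snd s0))"
proof -
  let ?K = "\<lambda>\<tau>. bind_pmf (synth_traj \<pi> Phat \<tau>) (\<lambda>\<tau>'. return_pmf (\<tau>, \<tau>'))"
  have Kb: "\<tau> \<in> set_pmf (traj P \<pi>b H s0) \<Longrightarrow> y \<in> set_pmf (?K \<tau>) \<Longrightarrow> \<bar>ret r (snd y)\<bar> \<le> real H * rmax" for \<tau> y s0
    apply (rule ret_abs_bd[OF rb]) by (auto dest!: synth_traj_len traj_set)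
  have "measure_pmf.expectation (bind_pmf (traj_law \<nu> P \<pi>b H) ?K) (\<lambda>D. ret r (snd D))
      = measure_pmf.expectation \<nu> (\<lambda>s0. measure_pmf.expectation (bind_pmf (traj P \<pi>b H s0) ?K) (\<lambda>D. ret r (snd D)))"
    unfolding traj_law_def bind_assoc_pmf
    apply (rule E_bind_pmf[where B="real H * rmax"]) using Kb by auto
  also have "\<dots> = measure_pmf.expectation \<nu> (\<lambda>s0. measure_pmf.expectation (traj P \<pi>b H s0)
        (\<lambda>\<tau>. measure_pmf.expectation (syn \<pi> Phat (snd s0) \<tau>) (ret r)))"
  proof -
    have "measure_pmf.expectation (bind_pmf (traj P \<pi>b H s0) ?K) (\<lambda>D. ret r (snd D))
       = measure_pmf.expectation (traj P \<pi>b H s0) (\<lambda>\<tau>. measure_pmf.expectation (syn \<pi> Phat (snd s0) \<tau>) (ret r))" for s0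
    proof -
      have "measure_pmf.expectation (bind_pmf (traj P \<pi>b H s0) ?K) (\<lambda>D. ret r (snd D))
        = measure_pmf.expectation (traj P \<pi>b H s0) (\<lambda>\<tau>. measure_pmf.expectation (?K \<tau>) (\<lambda>D. ret r (snd D)))"
        apply (rule E_bind_pmf[where B="real H * rmax"]) using Kb by auto
      also have "\<dots> = measure_pmf.expectation (traj P \<pi>b H s0) (\<lambda>\<tau>. measure_pmf.expectation (syn \<pi> Phat (snd s0) \<tau>) (ret r))"
        apply (rule integral_cong_AE) apply simp apply simp
        apply (rule AE_pmfI)
        apply (subst E_bind_pmf[where B="real H * rmax"])
         apply (rule ret_abs_bd[OF rb]) apply (force dest!: synth_traj_len traj_set)
        by (simp add: synth_traj_syn)
      finally show ?thesis .
    qed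
    then show ?thesis by simp
  qed
  also have "\<dots> = ex \<nu> (\<lambda>s0. Wf P Phat \<pi>b r \<pi> H s0 (snd s0))"
    by (simp add: LW[OF rb] expectation_ex)
  finally show ?thesis .
qed

lemma value_eq:
  assumes rb: "\<And>s a. 0 \<le> r s a \<and> r s a \<le> rmax"
  shows "value_fn \<nu> P r H \<pi> = ex \<nu> (\<lambda>s0. Vf P r \<pi> H s0)"
  unfolding value_fn_def traj_law_def
  apply (subst E_bind_pmf[where B="real H * rmax"])
   apply (rule ret_abs_bd[OF rb]) apply (force dest!: traj_set)
  by (simp add: LV[OF rb] expectation_ex)


theorem theorem2:
  fixes \<nu> :: "('x::finite \<times> 'e::finite) pmf"
    and Pexo :: "'x \<Rightarrow> 'a::finite \<Rightarrow> 'x pmf"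
    and Pend :: "'x \<times> 'e \<Rightarrow> 'a \<Rightarrow> 'e pmf"
    and Phat :: "'x \<times> 'e \<Rightarrow> 'a \<Rightarrow> 'e pmf"
    and r :: "'x \<times> 'e \<Rightarrow> 'a \<Rightarrow> real"
    and \<pi>b :: "'x \<times> 'e \<Rightarrow> 'a pmf"
    and \<pi> :: "'x \<times> 'e \<Rightarrow> 'a"
    and H N :: nat and rmax eps_air eps_p \<zeta> :: real
  assumes layers: "layered H \<nu> (trans Pexo Pend)"
    and reward: "\<And>s a. 0 \<le> r s a \<and> r s a \<le> rmax"
    and air: "AIR eps_air Pexo"
    and model: "\<And>s a. tv_dist (Pend s a) (Phat s a) \<le> eps_p"
    and N_pos: "N > 0"
    and zeta: "0 < \<zeta>" "\<zeta> < 1"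
  shows "measure_pmf.prob (data_and_synth N \<nu> Pexo Pend \<pi>b H \<pi> Phat)
           {D. \<bar>J_hat N r D - value_fn \<nu> (trans Pexo Pend) r H \<pi>\<bar>
                 \<le> (real H * rmax) * (real H * eps_air + real H * eps_p
                      + sqrt (ln (2 / \<zeta>) / (2 * real N)))}
         \<ge> 1 - \<zeta>"
proof -
  let ?P = "trans Pexo Pend"
  define pd where "pd = bind_pmf (traj_law \<nu> ?P \<pi>b H)
            (\<lambda>\<tau>. bind_pmf (synth_traj \<pi> Phat \<tau>) (\<lambda>\<tau>'. return_pmf (\<tau>, \<tau>')))"
  define g where "g = (\<lambda>D::(('x \<times> 'e) \<times> 'a) list \<times> (('x \<times> 'e) \<times> 'a) list. ret r (snd D))"
  define t where "t = sqrt (ln (2 / \<zeta>) / (2 * real N))"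
  define \<mu> where "\<mu> = measure_pmf.expectation pd g"
  define J where "J = value_fn \<nu> ?P r H \<pi>"
  have gb: "0 \<le> g x \<and> g x \<le> real H * rmax" if "x \<in> set_pmf pd" for x
  proof -
    have "length (snd x) = H" using that unfolding pd_def traj_law_def
      by (auto dest!: synth_traj_len traj_set)
    then show ?thesis unfolding g_def using ret_bd[of r rmax "snd x"] reward by simp
  qed
  have hf: "measure_pmf.prob (iid N pd)
     {D. \<bar>(1 / real N) * (\<Sum>i<N. g (D ! i)) - \<mu>\<bar> \<le> (real H * rmax) * t} \<ge> 1 - \<zeta>"
    unfolding \<mu>_def t_def by (rule hoeff[OF gb N_pos zeta])
  have "\<mu> - J = ex \<nu> (\<lambda>s0. Wf ?P Phat \<pi>b r \<pi> H s0 (snd s0) - Vf ?P r \<pi> H s0)"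
    unfolding \<mu>_def J_def pd_def g_def mean_eq[OF reward] value_eq[OF reward] ex_diff ..
  also have "\<bar>\<dots>\<bar> \<le> real H * real H * rmax * (eps_air + eps_p)"
  proof (rule ex_abs_le)
    fix x :: "'x \<times> 'e"
    have "\<bar>Wf ?P Phat \<pi>b r \<pi> H x (snd x) - Vf ?P r \<pi> H (fst x, snd x)\<bar>
       \<le> real H * real H * rmax * (eps_air + eps_p)"
      by (rule sim) (use reward air model in auto)
    then show "\<bar>Wf ?P Phat \<pi>b r \<pi> H x (snd x) - Vf ?P r \<pi> H x\<bar>
       \<le> real H * real H * rmax * (eps_air + eps_p)" by simp
  qed
  finally have mj: "\<bar>\<mu> - J\<bar> \<le> real H * real H * rmax * (eps_air + eps_p)" .
  have sub: "{D. \<bar>(1 / real N) * (\<Sum>i<N. g (D ! i)) - \<mu>\<bar> \<le> (real H * rmax) * t}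
     \<subseteq> {D. \<bar>J_hat N r D - J\<bar> \<le> (real H * rmax) * (real H * eps_air + real H * eps_p + t)}"
  proof
    fix D assume "D \<in> {D. \<bar>(1 / real N) * (\<Sum>i<N. g (D ! i)) - \<mu>\<bar> \<le> (real H * rmax) * t}"
    then have a: "\<bar>J_hat N r D - \<mu>\<bar> \<le> (real H * rmax) * t" unfolding J_hat_def g_def by simp
    have "(real H * rmax) * (real H * eps_air + real H * eps_p + t)
        = real H * real H * rmax * (eps_air + eps_p) + (real H * rmax) * t" by (simp add: algebra_simps)
    then show "D \<in> {D. \<bar>J_hat N r D - J\<bar> \<le> (real H * rmax) * (real H * eps_air + real H * eps_p + t)}"
      using a mj by simp
  qed
  have "measure_pmf.prob (iid N pd)
     {D. \<bar>(1 / real N) * (\<Sum>i<N. g (D ! i)) - \<mu>\<bar> \<le> (real H * rmax) * t}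
     \<le> measure_pmf.prob (iid N pd) {D. \<bar>J_hat N r D - J\<bar> \<le> (real H * rmax) * (real H * eps_air + real H * eps_p + t)}"
    by (rule measure_pmf.finite_measure_mono[OF sub]) simp
  then show ?thesis using hf unfolding data_and_synth_def pd_def J_def t_def by simp
qed

end
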